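(* Let $M$ be a matroid. If $M$ has two distinct bases that are disjoint, or its dual $M^\star$ has two distinct bases that are disjoint, then $M$ has the Borsuk property.
   Context: All matroids are finite. For a matroid $M$, $\mathcal{B}(M)$ denotes its set of bases, and the distance between two bases $B,B'$ is $|B\triangle B'|$ (symmetric difference); $\operatorname{diam}$ denotes the diameter with respect to this distance. The Borsuk number $f(M)$ is the minimum number of parts in a partition of $\mathcal{B}(M)$ in which every part has diameter strictly smaller than $\operatorname{diam}(\mathcal{B}(M))$; if $M$ has exactly one basis, $f(M):=+\infty$. If $M$ has $n$ elements and $c$ connected components, $M$ has the Borsuk property if $f(M)\le n-c+1$. *)

theory Defs
  imports Main "HOL-Library.Disjoint_Sets" "HOL-Library.Extended_Nat"
begin

definition matroid :: "'a set \<Rightarrow> 'a set set \<Rightarrow> bool" where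
  "matroid E Bs \<longleftrightarrow> finite E \<and> Bs \<noteq> {} \<and> (\<forall>B\<in>Bs. B \<subseteq> E) \<and>
     (\<forall>B1\<in>Bs. \<forall>B2\<in>Bs. \<forall>x\<in>B1 - B2. \<exists>y\<in>B2 - B1. insert y (B1 - {x}) \<in> Bs)"

definition dual_bases :: "'a set \<Rightarrow> 'a set set \<Rightarrow> 'a set set" where
  "dual_bases E Bs = (\<lambda>B. E - B) ` Bs"

definition indep :: "'a set set \<Rightarrow> 'a set \<Rightarrow> bool" where
  "indep Bs I \<longleftrightarrow> (\<exists>B\<in>Bs. I \<subseteq> B)"

definition circuit :: "'a set \<Rightarrow> 'a set set \<Rightarrow> 'a set \<Rightarrow> bool" where
  "circuit E Bs C \<longleftrightarrow> C \<subseteq> E \<and> \<not> indep Bs C \<and> (\<forall>x\<in>C. indep Bs (C - {x}))"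

definition conn_rel :: "'a set \<Rightarrow> 'a set set \<Rightarrow> ('a \<times> 'a) set" where
  "conn_rel E Bs = {(x, y). x \<in> E \<and> y \<in> E \<and>
      (x = y \<or> (\<exists>C. circuit E Bs C \<and> x \<in> C \<and> y \<in> C))}"

definition num_components :: "'a set \<Rightarrow> 'a set set \<Rightarrow> nat" where
  "num_components E Bs = card (E // conn_rel E Bs)"

definition basis_dist :: "'a set \<Rightarrow> 'a set \<Rightarrow> nat" where
  "basis_dist B B' = card ((B - B') \<union> (B' - B))"

definition diam :: "'a set set \<Rightarrow> nat" where
  "diam S = Max {basis_dist B B' | B B'. B \<in> S \<and> B' \<in> S}"

definition borsuk_number :: "'a set set \<Rightarrow> enat" where
  "borsuk_number Bs = (if card Bs \<le> 1 then \<infinity> else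
     enat (LEAST k. \<exists>P. partition_on Bs P \<and> card P = k \<and>
                        (\<forall>S\<in>P. diam S < diam Bs)))"

definition borsuk_property :: "'a set \<Rightarrow> 'a set set \<Rightarrow> bool" where
  "borsuk_property E Bs \<longleftrightarrow>
     borsuk_number Bs \<le> enat (card E - num_components E Bs + 1)"

end

theory Submission
  imports Defs
begin


locale mat =
  fixes E :: "'a set" and Bs :: "'a set set"
  assumes M: "matroid E Bs"
begin

lemma finE: "finite E" using M unfolding matroid_def by blast
lemma neBs: "Bs \<noteq> {}" using M unfolding matroid_def by blast
lemma subE: "B \<in> Bs \<Longrightarrow> B \<subseteq> E" using M unfolding matroid_def by blast
lemma exch: "B1 \<in> Bs \<Longrightarrow> B2 \<in> Bs \<Longrightarrow> x \<in> B1 - B2 \<Longrightarrow> \<exists>y\<in>B2 - B1. insert y (B1 - {x}) \<in> Bs"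
  using M unfolding matroid_def by blast
lemma finB: "B \<in> Bs \<Longrightarrow> finite B" using subE finE finite_subset by blast
lemma finBs: "finite Bs"
proof -
  have "Bs \<subseteq> Pow E" using subE by blast
  thus ?thesis using finE finite_subset by blast
qed

lemma card_insert_remove:
  assumes "finite B" "x \<in> B" "y \<notin> B"
  shows "card (insert y (B - {x})) = card B"
proof -
  have "card B > 0" using assms card_gt_0_iff by blast
  thus ?thesis using assms by (simp add: card_Diff_singleton)
qed

lemma card_eq_aux:
  assumes "B2 \<in> Bs"
  shows "\<forall>B1\<in>Bs. card (B1 - B2) = n \<longrightarrow> card B1 = card B2"
proof (induction n)
  case 0
  show ?case
  proof (intro ballI impI)
    fix B1 assume B1: "B1 \<in> Bs" "card (B1 - B2) = 0"
    have "B1 - B2 = {}" using B1 finB[OF B1(1)] by simp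
    hence s: "B1 \<subseteq> B2" by blast
    have "B2 - B1 = {}"
    proof (rule ccontr)
      assume "B2 - B1 \<noteq> {}"
      then obtain x where "x \<in> B2 - B1" by blast
      then obtain y where "y \<in> B1 - B2" using exch[OF assms B1(1)] by blast
      thus False using s by blast
    qed
    thus "card B1 = card B2" using s by (metis Diff_eq_empty_iff subset_antisym)
  qed
next
  case (Suc m)
  show ?case
  proof (intro ballI impI)
    fix B1 assume B1: "B1 \<in> Bs" "card (B1 - B2) = Suc m"
    then obtain x where x: "x \<in> B1 - B2" by (metis card.empty ex_in_conv nat.distinct(1))
    obtain y where y: "y \<in> B2 - B1" "insert y (B1 - {x}) \<in> Bs" using exch[OF B1(1) assms x] by blast
    let ?B = "insert y (B1 - {x})"
    have "?B - B2 = (B1 - B2) - {x}" using y by blast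
    hence cm: "card (?B - B2) = m" using B1 x finB by (simp add: card_Diff_singleton)
    have "card ?B = card B2" using Suc.IH[rule_format, OF y(2) cm] .
    moreover have "card ?B = card B1" by (rule card_insert_remove[OF finB[OF B1(1)]]) (use x y in blast)+
    ultimately show "card B1 = card B2" by simp
  qed
qed

lemma bcard: "B1 \<in> Bs \<Longrightarrow> B2 \<in> Bs \<Longrightarrow> card B1 = card B2"
  using card_eq_aux[of B2 "card (B1 - B2)"] by blast

lemma indep_sub: "indep Bs I \<Longrightarrow> J \<subseteq> I \<Longrightarrow> indep Bs J"
  unfolding indep_def by blast

lemma indep_card: "indep Bs I \<Longrightarrow> B \<in> Bs \<Longrightarrow> card I \<le> card B"
proof -
  assume a: "indep Bs I" "B \<in> Bs"
  then obtain B' where "B' \<in> Bs" "I \<subseteq> B'" unfolding indep_def by blast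
  hence "card I \<le> card B'" using card_mono finB by blast
  thus ?thesis using bcard[OF \<open>B' \<in> Bs\<close> a(2)] by simp
qed

lemma indepE: "indep Bs I \<Longrightarrow> I \<subseteq> E"
  unfolding indep_def using subE by blast

lemma extend_aux:
  assumes "B \<in> Bs"
  shows "\<forall>B0\<in>Bs. I \<subseteq> B0 \<longrightarrow> card (B0 - (I \<union> B)) = n \<longrightarrow> (\<exists>B'\<in>Bs. I \<subseteq> B' \<and> B' \<subseteq> I \<union> B)"
proof (induction n)
  case 0
  then show ?case using finB by auto
next
  case (Suc m)
  show ?case
  proof (intro ballI impI)
    fix B0 assume B0: "B0 \<in> Bs" "I \<subseteq> B0" "card (B0 - (I \<union> B)) = Suc m"
    then obtain x where x: "x \<in> B0 - (I \<union> B)" by (metis card.empty ex_in_conv nat.distinct(1))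
    obtain y where y: "y \<in> B - B0" "insert y (B0 - {x}) \<in> Bs" using exch[OF B0(1) assms] x by blast
    let ?B = "insert y (B0 - {x})"
    have "?B - (I \<union> B) = (B0 - (I \<union> B)) - {x}" using y by blast
    hence "card (?B - (I \<union> B)) = m" using B0 x finB by (simp add: card_Diff_singleton)
    moreover have "I \<subseteq> ?B" using B0 x by blast
    ultimately show "\<exists>B'\<in>Bs. I \<subseteq> B' \<and> B' \<subseteq> I \<union> B" using Suc y by blast
  qed
qed

lemma extend: "indep Bs I \<Longrightarrow> B \<in> Bs \<Longrightarrow> \<exists>B'\<in>Bs. I \<subseteq> B' \<and> B' \<subseteq> I \<union> B"
proof -
  assume a: "indep Bs I" "B \<in> Bs"
  then obtain B0 where "B0 \<in> Bs" "I \<subseteq> B0" unfolding indep_def by blast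
  thus ?thesis using extend_aux[OF a(2), of I "card (B0 - (I \<union> B))"] by blast
qed

lemma circ_ne: "circuit E Bs C \<Longrightarrow> C \<noteq> {}"
  unfolding circuit_def indep_def using neBs by blast

lemma circ_fin: "circuit E Bs C \<Longrightarrow> finite C"
  unfolding circuit_def using finE finite_subset by blast

lemma circ_incomp: "circuit E Bs C1 \<Longrightarrow> circuit E Bs C2 \<Longrightarrow> C1 \<subseteq> C2 \<Longrightarrow> C1 = C2"
proof (rule ccontr)
  assume a: "circuit E Bs C1" "circuit E Bs C2" "C1 \<subseteq> C2" "C1 \<noteq> C2"
  then obtain x where "x \<in> C2" "x \<notin> C1" by blast
  hence "indep Bs (C2 - {x})" "C1 \<subseteq> C2 - {x}" using a unfolding circuit_def by blast+
  hence "indep Bs C1" using indep_sub by blast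
  thus False using a(1) unfolding circuit_def by blast
qed

lemma circuit_exists_aux:
  "\<forall>X. card X = n \<longrightarrow> X \<subseteq> E \<longrightarrow> \<not> indep Bs X \<longrightarrow> (\<exists>C\<subseteq>X. circuit E Bs C)"
proof (induction n rule: less_induct)
  case (less n)
  show ?case
  proof (intro allI impI)
    fix X assume X: "card X = n" "X \<subseteq> E" "\<not> indep Bs X"
    show "\<exists>C\<subseteq>X. circuit E Bs C"
    proof (cases "\<forall>x\<in>X. indep Bs (X - {x})")
      case True
      then show ?thesis using X unfolding circuit_def by blast
    next
      case False
      then obtain x where x: "x \<in> X" "\<not> indep Bs (X - {x})" by blast
      have "finite X" using finite_subset[OF X(2) finE] .
      hence "card (X - {x}) < n" using card_Diff1_less[OF _ x(1)] X(1) by simp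
      have "X - {x} \<subseteq> E" using X by blast
      then obtain C where "C \<subseteq> X - {x}" "circuit E Bs C"
        using less.IH[rule_format, OF \<open>card (X - {x}) < n\<close> refl] x by blast
      thus ?thesis by blast
    qed
  qed
qed

lemma circuit_exists: "X \<subseteq> E \<Longrightarrow> \<not> indep Bs X \<Longrightarrow> \<exists>C\<subseteq>X. circuit E Bs C"
  using circuit_exists_aux[of "card X"] by blast

lemma fundamental:
  assumes B: "B \<in> Bs" and e: "e \<notin> B" and C: "circuit E Bs C" "C \<subseteq> insert e B"
    and f: "f \<in> C" "f \<noteq> e"
  shows "insert e (B - {f}) \<in> Bs"
proof -
  have "indep Bs (C - {f})" using C f unfolding circuit_def by blast
  then obtain B' where B': "B' \<in> Bs" "C - {f} \<subseteq> B'" "B' \<subseteq> (C - {f}) \<union> B" using extend[OF _ B] by blast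
  have "f \<notin> B'"
  proof
    assume "f \<in> B'"
    hence "C \<subseteq> B'" using B' by blast
    hence "indep Bs C" unfolding indep_def using B' by blast
    thus False using C unfolding circuit_def by blast
  qed
  hence sub: "B' \<subseteq> insert e (B - {f})" using B' C by blast
  have fB: "f \<in> B" using C f by blast
  have "card (insert e (B - {f})) = card B" by (rule card_insert_remove[OF finB[OF B] fB e])
  also have "... = card B'" using bcard[OF B B'(1)] by simp
  finally have ce: "card B' = card (insert e (B - {f}))" by simp
  have "finite (insert e (B - {f}))" using finB[OF B] by simp
  hence "B' = insert e (B - {f})" using card_subset_eq[OF _ sub ce] by blast
  thus ?thesis using B' by simp
qed

lemma weak_elim:
  assumes C1: "circuit E Bs C1" and C2: "circuit E Bs C2" and ne: "C1 \<noteq> C2"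
    and e: "e \<in> C1" "e \<in> C2"
  shows "\<exists>C3. circuit E Bs C3 \<and> C3 \<subseteq> (C1 \<union> C2) - {e}"
proof -
  have "\<not> indep Bs ((C1 \<union> C2) - {e})"
  proof
    assume "indep Bs ((C1 \<union> C2) - {e})"
    then obtain B where B: "B \<in> Bs" "(C1 \<union> C2) - {e} \<subseteq> B" unfolding indep_def by blast
    have eB: "e \<notin> B"
    proof
      assume "e \<in> B"
      hence "C1 \<subseteq> B" using B by blast
      thus False using B C1 unfolding circuit_def indep_def by blast
    qed
    have "\<not> C1 \<subseteq> C2" using circ_incomp C1 C2 ne by blast
    then obtain f where f: "f \<in> C1" "f \<notin> C2" by blast
    hence "f \<noteq> e" using e by blast
    hence "insert e (B - {f}) \<in> Bs" using fundamental[OF B(1) eB C1] B f by blast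
    moreover have "C2 \<subseteq> insert e (B - {f})" using B f by blast
    ultimately show False using C2 unfolding circuit_def indep_def by blast
  qed
  moreover have "(C1 \<union> C2) - {e} \<subseteq> E" using C1 C2 unfolding circuit_def by blast
  ultimately show ?thesis using circuit_exists by blast
qed

end


context mat
begin

lemma strong_elim_aux:
  "\<forall>C1 C2 e f. card (C1 \<union> C2) = n \<longrightarrow> circuit E Bs C1 \<longrightarrow> circuit E Bs C2 \<longrightarrow>
     e \<in> C1 \<longrightarrow> e \<in> C2 \<longrightarrow> f \<in> C1 \<longrightarrow> f \<notin> C2 \<longrightarrow>
     (\<exists>C3. circuit E Bs C3 \<and> f \<in> C3 \<and> C3 \<subseteq> (C1 \<union> C2) - {e})"
proof (induction n rule: less_induct)
  case (less n)
  show ?case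
  proof (intro allI impI)
    fix C1 C2 e f
    assume n: "card (C1 \<union> C2) = n" and C1: "circuit E Bs C1" and C2: "circuit E Bs C2"
      and e: "e \<in> C1" "e \<in> C2" and f: "f \<in> C1" "f \<notin> C2"
    have ne: "C1 \<noteq> C2" using f by blast
    have fin: "finite (C1 \<union> C2)" using circ_fin[OF C1] circ_fin[OF C2] by simp
    obtain C3 where C3: "circuit E Bs C3" "C3 \<subseteq> (C1 \<union> C2) - {e}"
      using weak_elim[OF C1 C2 ne e] by blast
    show "\<exists>C3. circuit E Bs C3 \<and> f \<in> C3 \<and> C3 \<subseteq> (C1 \<union> C2) - {e}"
    proof (cases "f \<in> C3")
      case True
      then show ?thesis using C3 by blast
    next
      case False
      have "\<not> C3 \<subseteq> C1"
      proof
        assume "C3 \<subseteq> C1"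
        hence "C3 = C1" using circ_incomp[OF C3(1) C1] by blast
        thus False using C3(2) e by blast
      qed
      then obtain g where g: "g \<in> C3" "g \<notin> C1" by blast
      hence gC2: "g \<in> C2" using C3 by blast
      have lt1: "card (C2 \<union> C3) < n"
      proof -
        have "C2 \<union> C3 \<subseteq> C1 \<union> C2" using C3 by blast
        moreover have "f \<notin> C2 \<union> C3" using False f by blast
        ultimately have "C2 \<union> C3 \<subset> C1 \<union> C2" using f by blast
        thus ?thesis using psubset_card_mono[OF fin] n by blast
      qed
      obtain C4 where C4: "circuit E Bs C4" "e \<in> C4" "C4 \<subseteq> (C2 \<union> C3) - {g}"
        using less.IH[rule_format, OF lt1 refl C2 C3(1) gC2 g(1) e(2)] C3(2) by blast
      have lt2: "card (C1 \<union> C4) < n"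
      proof -
        have "C1 \<union> C4 \<subseteq> C1 \<union> C2" using C3 C4 by blast
        moreover have "g \<notin> C1 \<union> C4" using g C4 by blast
        ultimately have "C1 \<union> C4 \<subset> C1 \<union> C2" using gC2 by blast
        thus ?thesis using psubset_card_mono[OF fin] n by blast
      qed
      have fC4: "f \<notin> C4" using C4 False f by blast
      obtain C5 where C5: "circuit E Bs C5" "f \<in> C5" "C5 \<subseteq> (C1 \<union> C4) - {e}"
        using less.IH[rule_format, OF lt2 refl C1 C4(1) e(1) C4(2) f(1) fC4] by blast
      have "C5 \<subseteq> (C1 \<union> C2) - {e}" using C5 C4 C3 by blast
      thus ?thesis using C5 by blast
    qed
  qed
qed

lemma strong_elim:
  "circuit E Bs C1 \<Longrightarrow> circuit E Bs C2 \<Longrightarrow> e \<in> C1 \<Longrightarrow> e \<in> C2 \<Longrightarrow> f \<in> C1 \<Longrightarrow> f \<notin> C2 \<Longrightarrow>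
     \<exists>C3. circuit E Bs C3 \<and> f \<in> C3 \<and> C3 \<subseteq> (C1 \<union> C2) - {e}"
  using strong_elim_aux[of "card (C1 \<union> C2)"] by blast

lemma trans_aux:
  "\<forall>C1 C2 x z. card (C1 \<union> C2) = n \<longrightarrow> circuit E Bs C1 \<longrightarrow> circuit E Bs C2 \<longrightarrow>
     C1 \<inter> C2 \<noteq> {} \<longrightarrow> x \<in> C1 \<longrightarrow> z \<in> C2 \<longrightarrow> (\<exists>C. circuit E Bs C \<and> x \<in> C \<and> z \<in> C)"
proof (induction n rule: less_induct)
  case (less n)
  show ?case
  proof (intro allI impI)
    fix C1 C2 x z
    assume n: "card (C1 \<union> C2) = n" and C1: "circuit E Bs C1" and C2: "circuit E Bs C2"
      and int: "C1 \<inter> C2 \<noteq> {}" and x: "x \<in> C1" and z: "z \<in> C2"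
    show "\<exists>C. circuit E Bs C \<and> x \<in> C \<and> z \<in> C"
    proof (cases "z \<in> C1 \<or> x \<in> C2")
      case True
      then show ?thesis using C1 C2 x z by blast
    next
      case False
      have fin: "finite (C1 \<union> C2)" using circ_fin[OF C1] circ_fin[OF C2] by simp
      obtain e where e: "e \<in> C1" "e \<in> C2" using int by blast
      obtain C3 where C3: "circuit E Bs C3" "x \<in> C3" "C3 \<subseteq> (C1 \<union> C2) - {e}"
        using strong_elim[OF C1 C2 e x] False by blast
      obtain C4 where C4: "circuit E Bs C4" "z \<in> C4" "C4 \<subseteq> (C1 \<union> C2) - {e}"
        using strong_elim[OF C2 C1 e(2) e(1) z] False by blast
      show ?thesis
      proof (cases "z \<in> C3 \<or> x \<in> C4")
        case True
        then show ?thesis using C3 C4 by blast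
      next
        case False2: False
        have "\<not> C3 \<subseteq> C1"
        proof
          assume "C3 \<subseteq> C1"
          hence "C3 = C1" using circ_incomp[OF C3(1) C1] by blast
          thus False using C3(3) e by blast
        qed
        then obtain g where g: "g \<in> C3" "g \<notin> C1" by blast
        have gC2: "g \<in> C2" using g C3 by blast
        have "\<not> C4 \<subseteq> C2"
        proof
          assume "C4 \<subseteq> C2"
          hence "C4 = C2" using circ_incomp[OF C4(1) C2] by blast
          thus False using C4(3) e by blast
        qed
        then obtain h where h: "h \<in> C4" "h \<notin> C2" by blast
        have hC1: "h \<in> C1" using h C4 by blast
        show ?thesis
        proof (cases "card (C3 \<union> C2) < n")
          case True
          have "C3 \<inter> C2 \<noteq> {}" using g gC2 by blast
          thus ?thesis using less.IH[rule_format, OF True refl C3(1) C2 _ C3(2) z] by blast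
        next
          case F3: False
          show ?thesis
          proof (cases "card (C1 \<union> C4) < n")
            case True
            have "C1 \<inter> C4 \<noteq> {}" using h hC1 by blast
            thus ?thesis using less.IH[rule_format, OF True refl C1 C4(1) _ x C4(2)] by blast
          next
            case F4: False
            have s3: "C3 \<union> C2 \<subseteq> C1 \<union> C2" using C3 by blast
            have "C3 \<union> C2 = C1 \<union> C2"
            proof (rule ccontr)
              assume "C3 \<union> C2 \<noteq> C1 \<union> C2"
              hence "C3 \<union> C2 \<subset> C1 \<union> C2" using s3 by blast
              thus False using psubset_card_mono[OF fin] n F3 by blast
            qed
            have s4: "C1 \<union> C4 \<subseteq> C1 \<union> C2" using C4 by blast
            have eq4: "C1 \<union> C4 = C1 \<union> C2"
            proof (rule ccontr)
              assume "C1 \<union> C4 \<noteq> C1 \<union> C2"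
              hence "C1 \<union> C4 \<subset> C1 \<union> C2" using s4 by blast
              thus False using psubset_card_mono[OF fin] n F4 by blast
            qed
            have gC4: "g \<in> C4" using eq4 gC2 g(2) by blast
            have s34: "C3 \<union> C4 \<subset> C1 \<union> C2" using C3 C4 e by blast
            have lt: "card (C3 \<union> C4) < n" using psubset_card_mono[OF fin s34] n by simp
            have "C3 \<inter> C4 \<noteq> {}" using g gC4 by blast
            thus ?thesis using less.IH[rule_format, OF lt refl C3(1) C4(1) _ C3(2) C4(2)] by blast
          qed
        qed
      qed
    qed
  qed
qed

lemma circ_common:
  "circuit E Bs C1 \<Longrightarrow> circuit E Bs C2 \<Longrightarrow> y \<in> C1 \<Longrightarrow> y \<in> C2 \<Longrightarrow> x \<in> C1 \<Longrightarrow> z \<in> C2 \<Longrightarrow>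
   \<exists>C. circuit E Bs C \<and> x \<in> C \<and> z \<in> C"
  using trans_aux[of "card (C1 \<union> C2)"] by blast

lemma conn_sym: "(x, y) \<in> conn_rel E Bs \<Longrightarrow> (y, x) \<in> conn_rel E Bs"
  unfolding conn_rel_def by blast

lemma conn_trans: "(x, y) \<in> conn_rel E Bs \<Longrightarrow> (y, z) \<in> conn_rel E Bs \<Longrightarrow> (x, z) \<in> conn_rel E Bs"
proof -
  assume a: "(x, y) \<in> conn_rel E Bs" "(y, z) \<in> conn_rel E Bs"
  show ?thesis
  proof (cases "x = y \<or> y = z")
    case True
    then show ?thesis using a by blast
  next
    case False
    then obtain C1 C2 where "circuit E Bs C1" "x \<in> C1" "y \<in> C1" "circuit E Bs C2" "y \<in> C2" "z \<in> C2"
      using a unfolding conn_rel_def by blast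
    then obtain C where "circuit E Bs C" "x \<in> C" "z \<in> C" using circ_common by blast
    thus ?thesis using a unfolding conn_rel_def by blast
  qed
qed

lemma fund_conn:
  assumes B: "B \<in> Bs" and x: "x \<in> B" and y: "y \<in> E" "y \<notin> B" and B': "insert y (B - {x}) \<in> Bs"
  shows "(x, y) \<in> conn_rel E Bs"
proof -
  have "\<not> indep Bs (insert y B)"
  proof
    assume "indep Bs (insert y B)"
    hence "card (insert y B) \<le> card B" using indep_card[OF _ B] by blast
    thus False using y finB[OF B] by simp
  qed
  moreover have "insert y B \<subseteq> E" using subE[OF B] y by blast
  ultimately obtain C where C: "C \<subseteq> insert y B" "circuit E Bs C" using circuit_exists by blast
  have "y \<in> C"
  proof (rule ccontr)
    assume "y \<notin> C"
    hence "C \<subseteq> B" using C by blast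
    hence "indep Bs C" unfolding indep_def using B by blast
    thus False using C unfolding circuit_def by blast
  qed
  moreover have "x \<in> C"
  proof (rule ccontr)
    assume "x \<notin> C"
    hence "C \<subseteq> insert y (B - {x})" using C by blast
    hence "indep Bs C" unfolding indep_def using B' by blast
    thus False using C unfolding circuit_def by blast
  qed
  ultimately show ?thesis unfolding conn_rel_def using C x y subE[OF B] by blast
qed

lemma count_classes:
  assumes D: "D \<subseteq> E" "e \<in> D" and conn: "\<forall>f\<in>D. (e, f) \<in> conn_rel E Bs"
  shows "card (E // conn_rel E Bs) + card D \<le> card E + 1"
proof -
  let ?R = "conn_rel E Bs"
  have cls: "?R `` {f} = ?R `` {e}" if "f \<in> D" for f
  proof -
    have ef: "(e, f) \<in> ?R" using conn that by blast
    hence fe: "(f, e) \<in> ?R" by (rule conn_sym)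
    show ?thesis
    proof
      show "?R `` {f} \<subseteq> ?R `` {e}" using conn_trans[OF ef] by blast
      show "?R `` {e} \<subseteq> ?R `` {f}" using conn_trans[OF fe] by blast
    qed
  qed
  have "E // ?R = (\<lambda>x. ?R `` {x}) ` E" unfolding quotient_def by blast
  also have "... = (\<lambda>x. ?R `` {x}) ` (E - D) \<union> (\<lambda>x. ?R `` {x}) ` D" using D by blast
  also have "(\<lambda>x. ?R `` {x}) ` D = {?R `` {e}}" using cls D by blast
  finally have eq: "E // ?R = (\<lambda>x. ?R `` {x}) ` (E - D) \<union> {?R `` {e}}" .
  have "card (E // ?R) \<le> card ((\<lambda>x. ?R `` {x}) ` (E - D)) + card {?R `` {e}}"
    unfolding eq by (rule card_Un_le)
  also have "... \<le> card (E - D) + 1" using card_image_le[OF finite_Diff[OF finE]] by simp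
  also have "... = card E - card D + 1" using card_Diff_subset[OF finite_subset[OF D(1) finE] D(1)] by simp
  finally show ?thesis using card_mono[OF finE D(1)] by simp
qed

end


lemma borsuk_le:
  assumes fin: "finite Bs" and B12: "B1 \<in> Bs" "B2 \<in> Bs" "B1 \<noteq> B2" and finD: "finite D"
    and cover: "\<forall>B\<in>Bs. \<exists>d\<in>D. Q d B"
    and small: "\<forall>d B B'. B \<in> Bs \<longrightarrow> B' \<in> Bs \<longrightarrow> Q d B \<longrightarrow> Q d B' \<longrightarrow> basis_dist B B' < diam Bs"
  shows "borsuk_number Bs \<le> enat (card D)"
proof -
  have "{B1, B2} \<subseteq> Bs" using B12 by blast
  hence "card {B1, B2} \<le> card Bs" by (rule card_mono[OF fin])
  hence c2: "\<not> card Bs \<le> 1" using B12 by simp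
  define g where "g B = (SOME d. d \<in> D \<and> Q d B)" for B
  have g: "g B \<in> D \<and> Q (g B) B" if "B \<in> Bs" for B
    unfolding g_def by (rule someI_ex) (use cover that in blast)
  define P where "P = (\<lambda>d. {B\<in>Bs. g B = d}) ` (g ` Bs)"
  have part: "partition_on Bs P"
  proof (rule partition_onI)
    show "\<Union>P = Bs" unfolding P_def by blast
    show "disjnt p q" if "p \<in> P" "q \<in> P" "p \<noteq> q" for p q
      using that unfolding P_def disjnt_def by auto
    show "{} \<notin> P" unfolding P_def by blast
  qed
  have "card P \<le> card (g ` Bs)" unfolding P_def by (rule card_image_le) (use fin in simp)
  also have "... \<le> card D" by (rule card_mono[OF finD]) (use g in blast)
  finally have cP: "card P \<le> card D" .
  have dS: "diam S < diam Bs" if "S \<in> P" for S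
  proof -
    obtain B0 where B0: "B0 \<in> Bs" "S = {B\<in>Bs. g B = g B0}" using \<open>S \<in> P\<close> unfolding P_def by blast
    let ?A = "{basis_dist B B' | B B'. B \<in> S \<and> B' \<in> S}"
    have "?A = (\<lambda>(B, B'). basis_dist B B') ` (S \<times> S)" by auto
    moreover have "finite S" using B0 fin by simp
    ultimately have finA: "finite ?A" by simp
    have neA: "?A \<noteq> {}" using B0 by blast
    have "\<forall>a\<in>?A. a < diam Bs"
    proof
      fix a assume "a \<in> ?A"
      then obtain B B' where BB: "a = basis_dist B B'" "B \<in> S" "B' \<in> S" by blast
      have inB: "B \<in> Bs" "B' \<in> Bs" "g B = g B0" "g B' = g B0" using BB B0 by blast+
      have "Q (g B) B" "Q (g B') B'" using g inB(1,2) by blast+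
      hence "Q (g B0) B" "Q (g B0) B'" using inB by simp_all
      thus "a < diam Bs" using small[rule_format, OF inB(1,2)] BB(1) by blast
    qed
    thus ?thesis unfolding diam_def[of S] using Max_less_iff[OF finA neA] by blast
  qed
  have "(LEAST k. \<exists>P. partition_on Bs P \<and> card P = k \<and> (\<forall>S\<in>P. diam S < diam Bs)) \<le> card P"
    by (rule Least_le) (use part dS in blast)
  thus ?thesis unfolding borsuk_number_def using c2 cP by simp
qed

context mat
begin

lemma diam_ge: "B1 \<in> Bs \<Longrightarrow> B2 \<in> Bs \<Longrightarrow> basis_dist B1 B2 \<le> diam Bs"
proof -
  assume a: "B1 \<in> Bs" "B2 \<in> Bs"
  let ?A = "{basis_dist B B' | B B'. B \<in> Bs \<and> B' \<in> Bs}"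
  have "?A = (\<lambda>(B, B'). basis_dist B B') ` (Bs \<times> Bs)" by auto
  hence finA: "finite ?A" using finBs by simp
  have "basis_dist B1 B2 \<in> ?A" using a by blast
  thus ?thesis unfolding diam_def using Max_ge[OF finA] by blast
qed

lemma dist_le: "B \<in> Bs \<Longrightarrow> B' \<in> Bs \<Longrightarrow> basis_dist B B' \<le> card (B - B') + card (B' - B)"
  unfolding basis_dist_def by (rule card_Un_le)

lemma card_diff_sym:
  assumes "B \<in> Bs" "B' \<in> Bs" shows "card (B - B') = card (B' - B)"
proof -
  have f: "finite B" "finite B'" using finB assms by auto
  have "card (B - B') = card B - card (B \<inter> B')"
    using card_Diff_subset_Int[of B B'] f by (simp add: Diff_Int2)
  moreover have "card (B' - B) = card B' - card (B' \<inter> B)"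
    using card_Diff_subset_Int[of B' B] f by (simp add: Diff_Int2)
  ultimately show ?thesis using bcard[OF assms] by (simp add: Int_commute)
qed

lemma final_arith:
  assumes "borsuk_number Bs \<le> enat (card D)" "D \<subseteq> E" "e \<in> D"
    and "\<forall>f\<in>D. (e, f) \<in> conn_rel E Bs"
  shows "borsuk_property E Bs"
proof -
  have c: "card (E // conn_rel E Bs) + card D \<le> card E + 1" using count_classes assms(2,3,4) by blast
  have "finite D" using finite_subset[OF assms(2) finE] .
  hence "card D > 0" using assms(3) card_gt_0_iff by blast
  hence "card D \<ge> 1" by simp
  hence "card D \<le> card E - num_components E Bs + 1" using c unfolding num_components_def by linarith
  hence "enat (card D) \<le> enat (card E - num_components E Bs + 1)" by simp
  thus ?thesis unfolding borsuk_property_def using order_trans[OF assms(1)] by blast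
qed

lemma case1:
  assumes B1: "B1 \<in> Bs" and B2: "B2 \<in> Bs" and ne: "B1 \<noteq> B2" and dj: "B1 \<inter> B2 = {}"
  shows "borsuk_property E Bs"
proof -
  have "B1 \<noteq> {}"
  proof
    assume "B1 = {}"
    hence "card B2 = 0" using bcard[OF B1 B2] by simp
    hence "B2 = {}" using finB[OF B2] by simp
    thus False using ne \<open>B1 = {}\<close> by simp
  qed
  then obtain e where e: "e \<in> B1" by blast
  define D where "D = insert e {f \<in> E - B1. insert f (B1 - {e}) \<in> Bs}"
  have DE: "D \<subseteq> E" unfolding D_def using e subE[OF B1] by blast
  have finD: "finite D" using finite_subset[OF DE finE] .
  have cover: "\<forall>B\<in>Bs. \<exists>d\<in>D. d \<in> B"
  proof
    fix B assume B: "B \<in> Bs"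
    show "\<exists>d\<in>D. d \<in> B"
    proof (cases "e \<in> B")
      case True
      then show ?thesis unfolding D_def by blast
    next
      case False
      then obtain y where "y \<in> B - B1" "insert y (B1 - {e}) \<in> Bs" using exch[OF B1 B] e by blast
      moreover have "y \<in> E" using calculation subE[OF B] by blast
      ultimately show ?thesis unfolding D_def by blast
    qed
  qed
  let ?r = "card B1"
  have r1: "?r \<ge> 1" using \<open>B1 \<noteq> {}\<close> finB[OF B1] by (simp add: Suc_leI card_gt_0_iff)
  have "basis_dist B1 B2 = card (B1 \<union> B2)" unfolding basis_dist_def using dj
    by (metis Diff_triv Int_commute)
  also have "... = ?r + ?r" using card_Un_disjoint[OF finB[OF B1] finB[OF B2] dj] bcard[OF B1 B2] by simp
  finally have dB: "2 * ?r \<le> diam Bs" using diam_ge[OF B1 B2] by simp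
  have small: "\<forall>d B B'. B \<in> Bs \<longrightarrow> B' \<in> Bs \<longrightarrow> d \<in> B \<longrightarrow> d \<in> B' \<longrightarrow> basis_dist B B' < diam Bs"
  proof (intro allI impI)
    fix d B B' assume a: "B \<in> Bs" "B' \<in> Bs" "d \<in> B" "d \<in> B'"
    have "card (B - B') \<le> card (B - {d})" by (rule card_mono) (use finB[OF a(1)] a in auto)
    also have "... = ?r - 1" using a bcard[OF a(1) B1] finB[OF a(1)] by simp
    finally have c1: "card (B - B') \<le> ?r - 1" .
    have "card (B' - B) \<le> card (B' - {d})" by (rule card_mono) (use finB[OF a(2)] a in auto)
    also have "... = ?r - 1" using a bcard[OF a(2) B1] finB[OF a(2)] by simp
    finally have c2: "card (B' - B) \<le> ?r - 1" .
    have "basis_dist B B' \<le> card (B - B') + card (B' - B)" by (rule dist_le[OF a(1,2)])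
    thus "basis_dist B B' < diam Bs" using c1 c2 dB r1 by linarith
  qed
  have bn: "borsuk_number Bs \<le> enat (card D)"
    by (rule borsuk_le[OF finBs B1 B2 ne finD cover small])
  have conn: "\<forall>f\<in>D. (e, f) \<in> conn_rel E Bs"
  proof
    fix f assume f: "f \<in> D"
    show "(e, f) \<in> conn_rel E Bs"
    proof (cases "f = e")
      case True
      then show ?thesis using e subE[OF B1] unfolding conn_rel_def by blast
    next
      case False
      hence "f \<in> E" "f \<notin> B1" "insert f (B1 - {e}) \<in> Bs" using f unfolding D_def by blast+
      thus ?thesis using fund_conn[OF B1 e] by blast
    qed
  qed
  show ?thesis by (rule final_arith[OF bn DE _ conn]) (simp add: D_def)
qed

lemma case2_aux:
  assumes B1: "B1 \<in> Bs" and e: "e \<in> E" "e \<notin> B1"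
  defines "D \<equiv> insert e {f \<in> B1. insert e (B1 - {f}) \<in> Bs}"
  shows "\<forall>B\<in>Bs. card (B - B1) = n \<longrightarrow> \<not> D \<subseteq> B"
proof (induction n)
  case 0
  show ?case
  proof (intro ballI impI)
    fix B assume B: "B \<in> Bs" "card (B - B1) = 0"
    have "B - B1 = {}" using B finB[OF B(1)] by simp
    thus "\<not> D \<subseteq> B" using e unfolding D_def by blast
  qed
next
  case (Suc m)
  show ?case
  proof (intro ballI impI notI)
    fix B assume B: "B \<in> Bs" "card (B - B1) = Suc m" and DB: "D \<subseteq> B"
    have eB: "e \<in> B" using DB unfolding D_def by blast
    show False
    proof (cases "B - B1 = {e}")
      case True
      have "card (B1 - B) = 1" using card_diff_sym[OF B(1) B1] True by simp
      then obtain y where y: "B1 - B = {y}" by (metis One_nat_def card_1_singleton_iff)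
      have eqB: "B = insert e (B1 - {y})"
      proof
        show "B \<subseteq> insert e (B1 - {y})" using y True by auto
        show "insert e (B1 - {y}) \<subseteq> B" using y eB by auto
      qed
      have yB1: "y \<in> B1" using y by blast
      have "insert e (B1 - {y}) \<in> Bs" using B(1) eqB by simp
      hence "y \<in> D" unfolding D_def using yB1 by blast
      thus False using DB y by blast
    next
      case False
      then obtain x where x: "x \<in> B - B1" "x \<noteq> e" using eB e by blast
      obtain y where y: "y \<in> B1 - B" "insert y (B - {x}) \<in> Bs" using exch[OF B(1) B1 x(1)] by blast
      let ?B = "insert y (B - {x})"
      have "x \<notin> D" unfolding D_def using x by blast
      hence DB': "D \<subseteq> ?B" using DB by blast
      have "?B - B1 = (B - B1) - {x}" using y by blast
      hence "card (?B - B1) = m" using B x finB by (simp add: card_Diff_singleton)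
      thus False using Suc.IH[rule_format, OF y(2)] DB' by blast
    qed
  qed
qed

lemma case2:
  assumes B1: "B1 \<in> Bs" and B2: "B2 \<in> Bs" and un: "B1 \<union> B2 = E" and e: "e \<in> E" "e \<notin> B1"
  shows "borsuk_property E Bs"
proof -
  define D where "D = insert e {f \<in> B1. insert e (B1 - {f}) \<in> Bs}"
  have ne: "B1 \<noteq> B2" using un e by blast
  have DE: "D \<subseteq> E" unfolding D_def using e subE[OF B1] by blast
  have finD: "finite D" using finite_subset[OF DE finE] .
  have cover: "\<forall>B\<in>Bs. \<exists>d\<in>D. d \<notin> B"
  proof
    fix B assume B: "B \<in> Bs"
    have "\<not> D \<subseteq> B" using case2_aux[OF B1 e, of "card (B - B1)"] B unfolding D_def by blast
    thus "\<exists>d\<in>D. d \<notin> B" by blast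
  qed
  let ?s = "card E - card B1"
  have cEB: "card (E - B) = ?s" if "B \<in> Bs" for B
    using card_Diff_subset[OF finB[OF that] subE[OF that]] bcard[OF that B1] by simp
  have "e \<in> E - B1" using e by blast
  hence "card (E - B1) > 0" using card_gt_0_iff finite_Diff[OF finE] by blast
  hence s1: "?s \<ge> 1" using cEB[OF B1] by simp
  have "basis_dist B1 B2 = card ((E - B2) \<union> (E - B1))" unfolding basis_dist_def
  proof -
    have "(B1 - B2) \<union> (B2 - B1) = (E - B2) \<union> (E - B1)" using un by blast
    thus "card ((B1 - B2) \<union> (B2 - B1)) = card ((E - B2) \<union> (E - B1))" by simp
  qed
  also have "... = ?s + ?s"
  proof -
    have "(E - B2) \<inter> (E - B1) = {}" using un by blast
    thus ?thesis using card_Un_disjoint[of "E - B2" "E - B1"] finE cEB[OF B1] cEB[OF B2] by simp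
  qed
  finally have dB: "2 * ?s \<le> diam Bs" using diam_ge[OF B1 B2] by simp
  have small: "\<forall>d B B'. B \<in> Bs \<longrightarrow> B' \<in> Bs \<longrightarrow> d \<in> D \<and> d \<notin> B \<longrightarrow> d \<in> D \<and> d \<notin> B' \<longrightarrow> basis_dist B B' < diam Bs"
  proof (intro allI impI)
    fix d B B' assume a: "B \<in> Bs" "B' \<in> Bs" "d \<in> D \<and> d \<notin> B" "d \<in> D \<and> d \<notin> B'"
    have dE: "d \<in> E" using a DE by blast
    have "card (B - B') \<le> card ((E - B') - {d})" by (rule card_mono) (use finE subE[OF a(1)] a in auto)
    also have "... = ?s - 1" using a dE cEB[OF a(2)] by simp
    finally have c1: "card (B - B') \<le> ?s - 1" .
    have "card (B' - B) \<le> card ((E - B) - {d})" by (rule card_mono) (use finE subE[OF a(2)] a in auto)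
    also have "... = ?s - 1" using a dE cEB[OF a(1)] by simp
    finally have c2: "card (B' - B) \<le> ?s - 1" .
    have "basis_dist B B' \<le> card (B - B') + card (B' - B)" by (rule dist_le[OF a(1,2)])
    thus "basis_dist B B' < diam Bs" using c1 c2 dB s1 by linarith
  qed
  have cover': "\<forall>B\<in>Bs. \<exists>d\<in>D. d \<in> D \<and> d \<notin> B" using cover by blast
  have bn: "borsuk_number Bs \<le> enat (card D)"
    by (rule borsuk_le[OF finBs B1 B2 ne finD cover' small])
  have conn: "\<forall>f\<in>D. (e, f) \<in> conn_rel E Bs"
  proof
    fix f assume f: "f \<in> D"
    show "(e, f) \<in> conn_rel E Bs"
    proof (cases "f = e")
      case True
      then show ?thesis using e unfolding conn_rel_def by blast
    next
      case False
      hence "f \<in> B1" "insert e (B1 - {f}) \<in> Bs" using f unfolding D_def by blast+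
      hence "(f, e) \<in> conn_rel E Bs" using fund_conn[OF B1 _ e] by blast
      thus ?thesis by (rule conn_sym)
    qed
  qed
  show ?thesis by (rule final_arith[OF bn DE _ conn]) (simp add: D_def)
qed

end

theorem theorem1:
  fixes E :: "'a set" and Bs :: "'a set set"
  assumes "matroid E Bs"
    and "(\<exists>B1\<in>Bs. \<exists>B2\<in>Bs. B1 \<noteq> B2 \<and> B1 \<inter> B2 = {}) \<or>
         (\<exists>B1\<in>dual_bases E Bs. \<exists>B2\<in>dual_bases E Bs. B1 \<noteq> B2 \<and> B1 \<inter> B2 = {})"
  shows "borsuk_property E Bs"
proof -
  interpret mat E Bs by (rule mat.intro[OF assms(1)])
  show ?thesis
  proof (cases "\<exists>B1\<in>Bs. \<exists>B2\<in>Bs. B1 \<noteq> B2 \<and> B1 \<inter> B2 = {}")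
    case True
    then obtain B1 B2 where "B1 \<in> Bs" "B2 \<in> Bs" "B1 \<noteq> B2" "B1 \<inter> B2 = {}" by blast
    thus ?thesis using case1 by blast
  next
    case False
    then obtain A1 A2 where A: "A1 \<in> dual_bases E Bs" "A2 \<in> dual_bases E Bs" "A1 \<noteq> A2" "A1 \<inter> A2 = {}"
      using assms(2) by blast
    then obtain B1 B2 where B: "B1 \<in> Bs" "B2 \<in> Bs" "A1 = E - B1" "A2 = E - B2"
      unfolding dual_bases_def by blast
    have un: "B1 \<union> B2 = E" using A B subE[OF B(1)] subE[OF B(2)] by blast
    show ?thesis
    proof (cases "E - B1 = {}")
      case True
      then obtain e where "e \<in> E - B2" using A B by blast
      moreover have "B2 \<union> B1 = E" using un by blast
      ultimately show ?thesis using case2[OF B(2) B(1)] by blast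
    next
      case False
      then obtain e where "e \<in> E - B1" by blast
      thus ?thesis using case2[OF B(1) B(2) un] by blast
    qed
  qed
qed

end
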